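(* Let $X$ and $Y$ be CW complexes and $k\ge 0$. Then the map $$\hat p_k:\hat G_k(X\times Y)=\bigcup_{i+j=k}G_iX\times G_jY\longrightarrow X\times Y,$$ given on $G_iX\times G_jY$ by $p_i^X\times p_j^Y$, is a Serre fibration.
   Context: For a path-connected space $X$, $p_0^X:G_0X\to X$ is the fibration obtained by converting the inclusion of a base point into a fibration (the path fibration). For fibrations $f_l:X_l\to B$, the fiberwise join $X_0*_B\cdots*_BX_n$ is the subspace of the join $X_0*\cdots*X_n$ consisting of formal combinations $t_0x_0+\cdots+t_nx_n$ ($t_l\ge0$, $\sum t_l=1$, terms with $t_l=0$ dropped) with all $f_l(x_l)$ equal, mapping to this common point. The $n$-th Ganea space $G_nX$ is the fiberwise join of $n+1$ copies of $G_0X$ over $X$, and $p_n^X:G_nX\to X$ is the $n$-th Ganea fibration; there are natural inclusions $G_0X\subset G_1X\subset\cdots$ with $p_n^X$ the restriction of $p_{n+1}^X$. Thus $\hat G_k(X\times Y)\subset G_kX\times G_kY$. A Serre fibration is a map with the homotopy lifting property for all CW complexes. *)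

theory Defs
  imports "HOL-Analysis.Analysis"
begin

definition disk :: "nat \<Rightarrow> (nat \<Rightarrow> real) set" where
  "disk n = {v. (\<forall>i\<ge>n. v i = 0) \<and> (\<Sum>i<n. (v i)\<^sup>2) \<le> 1}"

definition open_disk :: "nat \<Rightarrow> (nat \<Rightarrow> real) set" where
  "open_disk n = {v. (\<forall>i\<ge>n. v i = 0) \<and> (\<Sum>i<n. (v i)\<^sup>2) < 1}"

definition sphere_bd :: "nat \<Rightarrow> (nat \<Rightarrow> real) set" where
  "sphere_bd n = {v. (\<forall>i\<ge>n. v i = 0) \<and> (\<Sum>i<n. (v i)\<^sup>2) = 1}"

definition disk_top :: "nat \<Rightarrow> (nat \<Rightarrow> real) topology" where
  "disk_top n = subtopology (powertop_real UNIV) (disk n)"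

definition cw_complex :: "'a topology \<Rightarrow> bool" where
  "cw_complex X \<longleftrightarrow> Hausdorff_space X \<and>
    (\<exists>(C :: 'a set set) (dim :: 'a set \<Rightarrow> nat) (\<Phi> :: 'a set \<Rightarrow> (nat \<Rightarrow> real) \<Rightarrow> 'a).
       \<Union>C = topspace X \<and> {} \<notin> C \<and> pairwise disjnt C \<and>
       (\<forall>e\<in>C. continuous_map (disk_top (dim e)) X (\<Phi> e)
             \<and> \<Phi> e ` open_disk (dim e) = e
             \<and> homeomorphic_map (subtopology (disk_top (dim e)) (open_disk (dim e)))
                                 (subtopology X e) (\<Phi> e)
             \<and> (\<exists>F\<subseteq>C. finite F \<and> (\<forall>e'\<in>F. dim e' < dim e)
                       \<and> \<Phi> e ` sphere_bd (dim e) \<subseteq> \<Union>F)) \<and>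
       (\<forall>A\<subseteq>topspace X.
          (\<forall>e\<in>C. closedin (subtopology X (X closure_of e)) (A \<inter> X closure_of e))
          \<longrightarrow> closedin X A))"

abbreviation unit_interval_top :: "real topology" where
  "unit_interval_top \<equiv> top_of_set {0..1}"

definition homotopy_lifting :: "'c topology \<Rightarrow> 'e topology \<Rightarrow> 'b topology \<Rightarrow> ('e \<Rightarrow> 'b) \<Rightarrow> bool" where
  "homotopy_lifting K E B p \<longleftrightarrow>
    (\<forall>f H. continuous_map K E f
       \<and> continuous_map (prod_topology K unit_interval_top) B H
       \<and> (\<forall>k\<in>topspace K. H (k, 0) = p (f k))
       \<longrightarrow> (\<exists>H'. continuous_map (prod_topology K unit_interval_top) E H'
              \<and> (\<forall>z\<in>topspace (prod_topology K unit_interval_top). p (H' z) = H z)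
              \<and> (\<forall>k\<in>topspace K. H' (k, 0) = f k)))"

text \<open>The CW complexes are
 taken on the type given by the first argument; stating the result for a free type variable
 quantifies over all types.\<close>

definition serre_fibration :: "'c itself \<Rightarrow> 'e topology \<Rightarrow> 'b topology \<Rightarrow> ('e \<Rightarrow> 'b) \<Rightarrow> bool" where
  "serre_fibration (ty :: 'c itself) E B p \<longleftrightarrow>
     continuous_map E B p \<and>
     (\<forall>K :: 'c topology. cw_complex K \<longrightarrow> homotopy_lifting K E B p)"

definition path_pts :: "'a topology \<Rightarrow> 'a \<Rightarrow> (real \<Rightarrow> 'a) set" where
  "path_pts X x0 = {w. pathin X w \<and> w 0 = x0 \<and> (\<forall>t. t \<notin> {0..1} \<longrightarrow> w t = undefined)}"

definition path_space :: "'a topology \<Rightarrow> 'a \<Rightarrow> (real \<Rightarrow> 'a) topology" where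
  "path_space X x0 = subtopology
     (topology_generated_by {{w. w ` K \<subseteq> U} | K U. compactin unit_interval_top K \<and> openin X U})
     (path_pts X x0)"

definition path_end :: "(real \<Rightarrow> 'a) \<Rightarrow> 'a" where
  "path_end w = w 1"

text \<open>A point t_0 x_0 + ... + t_n x_n is a pair (t, x) with t l = 0 for l > n,
 and x l = undefined whenever t l = 0 (the dropped terms).\<close>

definition fjoin_pts :: "'e topology \<Rightarrow> ('e \<Rightarrow> 'b) \<Rightarrow> nat \<Rightarrow> ((nat \<Rightarrow> real) \<times> (nat \<Rightarrow> 'e)) set" where
  "fjoin_pts E f n = {(t, x). (\<forall>l. 0 \<le> t l) \<and> (\<forall>l>n. t l = 0) \<and> (\<Sum>l\<le>n. t l) = 1
      \<and> (\<forall>l. t l = 0 \<longrightarrow> x l = undefined) \<and> (\<forall>l. t l \<noteq> 0 \<longrightarrow> x l \<in> topspace E)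
      \<and> (\<forall>l l'. t l \<noteq> 0 \<and> t l' \<noteq> 0 \<longrightarrow> f (x l) = f (x l'))}"

definition fjoin :: "'e topology \<Rightarrow> ('e \<Rightarrow> 'b) \<Rightarrow> nat \<Rightarrow> ((nat \<Rightarrow> real) \<times> (nat \<Rightarrow> 'e)) topology" where
  "fjoin E f n = topology_generated_by
     ({{z \<in> fjoin_pts E f n. fst z l \<in> U} | l U. open U}
      \<union> {{z \<in> fjoin_pts E f n. fst z l \<noteq> 0 \<and> snd z l \<in> V} | l V. openin E V})"

definition fjoin_proj :: "('e \<Rightarrow> 'b) \<Rightarrow> (nat \<Rightarrow> real) \<times> (nat \<Rightarrow> 'e) \<Rightarrow> 'b" where
  "fjoin_proj f z = f (snd z (LEAST l. fst z l \<noteq> 0))"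

definition ganea :: "'a topology \<Rightarrow> 'a \<Rightarrow> nat \<Rightarrow> ((nat \<Rightarrow> real) \<times> (nat \<Rightarrow> (real \<Rightarrow> 'a))) topology" where
  "ganea X x0 n = fjoin (path_space X x0) path_end n"

definition ganea_fib :: "(nat \<Rightarrow> real) \<times> (nat \<Rightarrow> (real \<Rightarrow> 'a)) \<Rightarrow> 'a" where
  "ganea_fib z = fjoin_proj path_end z"

definition ganea_prod :: "'a topology \<Rightarrow> 'a \<Rightarrow> 'b topology \<Rightarrow> 'b \<Rightarrow> nat \<Rightarrow>
    (((nat \<Rightarrow> real) \<times> (nat \<Rightarrow> (real \<Rightarrow> 'a))) \<times> ((nat \<Rightarrow> real) \<times> (nat \<Rightarrow> (real \<Rightarrow> 'b)))) topology" where
  "ganea_prod X x0 Y y0 k = subtopology (prod_topology (ganea X x0 k) (ganea Y y0 k))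
     (\<Union>i\<le>k. topspace (ganea X x0 i) \<times> topspace (ganea Y y0 (k - i)))"

definition ganea_prod_fib ::
  "((nat \<Rightarrow> real) \<times> (nat \<Rightarrow> (real \<Rightarrow> 'a))) \<times> ((nat \<Rightarrow> real) \<times> (nat \<Rightarrow> (real \<Rightarrow> 'b))) \<Rightarrow> 'a \<times> 'b" where
  "ganea_prod_fib z = (ganea_fib (fst z), ganea_fib (snd z))"

end

theory Submission
  imports Defs
begin

lemma topspace_path_space: "topspace (path_space X x0) = path_pts X x0"
proof -
  have "UNIV \<in> {{w. w ` K \<subseteq> U} | K U. compactin unit_interval_top K \<and> openin X U}"
  proof -
    have "UNIV = {w::real\<Rightarrow>'a. w ` {} \<subseteq> {}}" by simp
    moreover have "compactin unit_interval_top {}" "openin X {}" by auto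
    ultimately show ?thesis by blast
  qed
  then have "topspace (topology_generated_by {{w. w ` K \<subseteq> U} | K U. compactin unit_interval_top K \<and> openin X U}) = UNIV"
    by (auto simp del: Collect_mem_eq)
  then show ?thesis unfolding path_space_def by simp
qed

lemma topspace_fjoin: "topspace (fjoin E f n) = fjoin_pts E f n"
proof -
  have "fjoin_pts E f n \<in> {{z \<in> fjoin_pts E f n. fst z l \<in> U} | l U. open U}"
    by (rule CollectI, rule exI[of _ 0], rule exI[of _ UNIV]) auto
  then show ?thesis unfolding fjoin_def topology_generated_by_topspace by blast
qed

lemma exp_path:
  assumes G: "continuous_map (prod_topology Z unit_interval_top) X G"
    and G0: "\<And>z. z \<in> topspace Z \<Longrightarrow> G (z,0) = x0"
  shows "continuous_map Z (path_space X x0) (\<lambda>z u. if u \<in> {0..1} then G (z,u) else undefined)"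
  unfolding path_space_def continuous_map_in_subtopology
proof
  show "(\<lambda>z u. if u \<in> {0..1} then G (z,u) else undefined) \<in> topspace Z \<rightarrow> path_pts X x0"
  proof
    fix z assume z: "z \<in> topspace Z"
    have "continuous_map unit_interval_top X (G \<circ> Pair z)"
      by (rule continuous_map_compose[OF _ G]) (simp add: z continuous_map_pairwise o_def)
    then have "pathin X (\<lambda>u. if u \<in> {0..1} then G (z,u) else undefined)"
      unfolding pathin_def by (rule continuous_map_eq) auto
    then show "(\<lambda>u. if u \<in> {0..1} then G (z,u) else undefined) \<in> path_pts X x0"
      unfolding path_pts_def using G0[OF z] by auto
  qed
next
  show "continuous_map Z (topology_generated_by {{w. w ` K \<subseteq> U} | K U. compactin unit_interval_top K \<and> openin X U})
     (\<lambda>z u. if u \<in> {0..1} then G (z,u) else undefined)"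
  proof (rule continuous_on_generated_topo)
    fix S assume "S \<in> {{w. w ` K \<subseteq> U} | K U. compactin unit_interval_top K \<and> openin X U}"
    then obtain C V where S: "S = {w. w ` C \<subseteq> V}" and C: "compactin unit_interval_top C" and V: "openin X V"
      by blast
    have C01: "C \<subseteq> {0..1}" using C compactin_subset_topspace by fastforce
    let ?W = "{p \<in> topspace (prod_topology Z unit_interval_top). G p \<in> V}"
    have W: "openin (prod_topology Z unit_interval_top) ?W"
      using openin_continuous_map_preimage[OF G V] .
    have eq: "(\<lambda>z u. if u \<in> {0..1} then G (z,u) else undefined) -` S \<inter> topspace Z = {z \<in> topspace Z. \<forall>u\<in>C. G (z,u) \<in> V}"
      using C01 unfolding S by (auto simp: image_subset_iff subset_iff)
    show "openin Z ((\<lambda>z u. if u \<in> {0..1} then G (z,u) else undefined) -` S \<inter> topspace Z)"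
      unfolding eq
    proof (subst openin_subopen, intro ballI)
      fix z0 assume z0: "z0 \<in> {z \<in> topspace Z. \<forall>u\<in>C. G (z,u) \<in> V}"
      have "{z0} \<times> C \<subseteq> ?W" using z0 C01 by auto
      from tube_lemma_right[OF W C _ this] z0
      obtain U V' where "openin Z U" "openin unit_interval_top V'" "z0 \<in> U" "C \<subseteq> V'" "U \<times> V' \<subseteq> ?W"
        by auto
      then show "\<exists>T. openin Z T \<and> z0 \<in> T \<and> T \<subseteq> {z \<in> topspace Z. \<forall>u\<in>C. G (z,u) \<in> V}"
        by (intro exI[of _ U]) (auto dest: openin_subset)
    qed
  next
    show "(\<lambda>z u. if u \<in> {0..1} then G (z,u) else undefined) ` topspace Z \<subseteq> \<Union> {{w. w ` K \<subseteq> U} | K U. compactin unit_interval_top K \<and> openin X U}"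
    proof -
      have "UNIV = {w::real\<Rightarrow>'a. w ` {} \<subseteq> {}}" by simp
      moreover have "compactin unit_interval_top {}" "openin X {}" by auto
      ultimately have "UNIV \<in> {{w. w ` K \<subseteq> U} | K U. compactin unit_interval_top K \<and> openin X U}" by blast
      then show ?thesis by blast
    qed
  qed
qed

lemma ev_path:
  "continuous_map (prod_topology (path_space X x0) unit_interval_top) X (\<lambda>(w,u). w u)"
  unfolding continuous_map_def
proof (intro conjI allI impI)
  show "(\<lambda>(w,u). w u) \<in> topspace (prod_topology (path_space X x0) unit_interval_top) \<rightarrow> topspace X"
    by (auto simp: topspace_path_space path_pts_def pathin_def continuous_map_def)
next
  fix V assume V: "openin X V"
  let ?S = "{x \<in> topspace (prod_topology (path_space X x0) unit_interval_top). (case x of (w, u) \<Rightarrow> w u) \<in> V}"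
  show "openin (prod_topology (path_space X x0) unit_interval_top) ?S"
    unfolding openin_prod_topology_alt
  proof (intro allI impI)
    fix w0 u0 assume wu: "(w0, u0) \<in> ?S"
    then have w0: "w0 \<in> path_pts X x0" and u0: "u0 \<in> {0..1}" and wV: "w0 u0 \<in> V"
      by (auto simp: topspace_path_space)
    have "pathin X w0" using w0 by (simp add: path_pts_def)
    then have "openin unit_interval_top {u \<in> topspace unit_interval_top. w0 u \<in> V}"
      unfolding pathin_def using V by (rule openin_continuous_map_preimage)
    then have "openin unit_interval_top {u \<in> {0..1}. w0 u \<in> V}" by simp
    then obtain e where e: "e > 0" "\<And>u. u \<in> {0..1} \<Longrightarrow> dist u u0 < e \<Longrightarrow> w0 u \<in> V"
      using u0 wV unfolding openin_euclidean_subtopology_iff by force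
    define C where "C = {max 0 (u0 - e/2) .. min 1 (u0 + e/2)}"
    have CI: "compactin unit_interval_top C"
      unfolding compactin_subtopology C_def by (auto simp: compactin_euclidean_iff)
    have CV: "w0 ` C \<subseteq> V"
    proof
      fix y assume "y \<in> w0 ` C"
      then obtain u where "u \<in> C" "y = w0 u" by auto
      then have "u \<in> {0..1}" "dist u u0 < e" using e unfolding C_def dist_real_def by (auto simp: abs_if)
      then show "y \<in> V" using e(2) \<open>y = w0 u\<close> by blast
    qed
    define U where "U = path_pts X x0 \<inter> {w. w ` C \<subseteq> V}"
    have "openin (topology_generated_by {{w. w ` K \<subseteq> U} | K U. compactin unit_interval_top K \<and> openin X U}) {w. w ` C \<subseteq> V}"
      by (rule topology_generated_by_Basis) (use CI V in blast)
    then have Uo: "openin (path_space X x0) U"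
      unfolding U_def path_space_def by (simp add: openin_subtopology_Int2)
    define U' where "U' = {0..1} \<inter> {u. dist u u0 < e/2}"
    have U'o: "openin unit_interval_top U'"
      unfolding U'_def
    proof (rule openin_subtopology_Int2)
      have "{u. dist u u0 < e/2} = ball u0 (e/2)" by (auto simp: ball_def dist_commute)
      then show "openin euclideanreal {u. dist u u0 < e / 2}" by simp
    qed
    show "\<exists>U V'. openin (path_space X x0) U \<and> openin unit_interval_top V' \<and> w0 \<in> U \<and> u0 \<in> V' \<and> U \<times> V' \<subseteq> ?S"
    proof (intro exI conjI)
      show "w0 \<in> U" using w0 CV U_def by auto
      show "u0 \<in> U'" using u0 e U'_def by auto
      show "U \<times> U' \<subseteq> ?S"
      proof
        fix p assume "p \<in> U \<times> U'"
        then obtain w u where p: "p = (w,u)" "w \<in> U" "u \<in> U'" by blast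
        then have "u \<in> C" "w ` C \<subseteq> V" "w \<in> path_pts X x0" "u \<in> {0..1}"
          unfolding U_def U'_def C_def dist_real_def by (auto simp: abs_if split: if_splits)
        then show "p \<in> ?S" using p(1) by (auto simp: topspace_path_space)
      qed
    qed (use Uo U'o in auto)
  qed
qed

definition lam :: "(real \<Rightarrow> 'a) \<Rightarrow> (real \<Rightarrow> 'a) \<Rightarrow> real \<Rightarrow> real \<Rightarrow> 'a" where
  "lam w h s = (\<lambda>u. if u \<in> {0..1} then (if (1+s)*u \<le> 1 then w ((1+s)*u) else h ((1+s)*u - 1)) else undefined)"

lemma arith1: "0 \<le> (s::real) \<Longrightarrow> 0 \<le> u \<Longrightarrow> (1+s)*u \<le> 1 \<Longrightarrow> (1+s)*u \<in> {0..1}"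
  by simp

lemma arith2: "0 \<le> (s::real) \<Longrightarrow> s \<le> 1 \<Longrightarrow> u \<le> 1 \<Longrightarrow> 1 \<le> (1+s)*u \<Longrightarrow> (1+s)*u - 1 \<in> {0..s}"
proof -
  assume a: "0 \<le> s" "s \<le> 1" "u \<le> 1" "1 \<le> (1+s)*u"
  have "(1+s)*u \<le> (1+s)*1" using a by (intro mult_left_mono) auto
  then have "(1+s)*u \<le> 1+s" by simp
  then have "(1+s)*u - 1 \<ge> 0" "(1+s)*u - 1 \<le> s" using a by linarith+
  then show ?thesis by simp
qed

lemma cont_fst_fst_real:
  "continuous_map (prod_topology (prod_topology T unit_interval_top) unit_interval_top) euclideanreal (\<lambda>y. snd (fst y))"
proof -
  have "continuous_map (prod_topology (prod_topology T unit_interval_top) unit_interval_top) unit_interval_top (snd \<circ> fst)"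
    by (rule continuous_map_compose[OF continuous_map_fst continuous_map_snd])
  then show ?thesis by (simp add: o_def continuous_map_in_subtopology)
qed

lemma cont_snd_real:
  "continuous_map (prod_topology Z unit_interval_top) euclideanreal (\<lambda>y. snd y)"
  using continuous_map_snd[of Z unit_interval_top] by (simp add: continuous_map_in_subtopology)

lemma lift_path_cont:
  assumes w: "continuous_map T (path_space X x0) w"
    and h: "continuous_map (prod_topology T unit_interval_top) X h"
    and wh: "\<And>k. k \<in> topspace T \<Longrightarrow> w k 1 = h (k,0)"
  shows "continuous_map (prod_topology T unit_interval_top) (path_space X x0)
           (\<lambda>z. lam (w (fst z)) (\<lambda>v. h (fst z, v)) (snd z))"
proof -
  let ?P = "prod_topology (prod_topology T unit_interval_top) unit_interval_top"
  let ?p = "\<lambda>y. (1 + snd (fst y)) * snd y"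
  let ?F1 = "\<lambda>y. w (fst (fst y)) (?p y)"
  let ?F2 = "\<lambda>y. h (fst (fst y), ?p y - 1)"
  have tsP: "topspace ?P = (topspace T \<times> {0..1}) \<times> {0..1}" by simp
  have contp: "continuous_map ?P euclideanreal ?p"
    by (intro continuous_intros cont_fst_fst_real cont_snd_real)
  have cff: "continuous_map (subtopology ?P S) T (\<lambda>y. fst (fst y))" for S
    by (rule continuous_map_from_subtopology) (simp add: continuous_map_compose[OF continuous_map_fst continuous_map_fst, unfolded o_def])
  have G: "continuous_map ?P X (\<lambda>y. if ?p y \<le> 1 then ?F1 y else ?F2 y)"
  proof (rule continuous_map_cases_le[OF contp continuous_map_const[THEN iffD2]])
    show "continuous_map (subtopology ?P {x \<in> topspace ?P. ?p x \<le> 1}) X ?F1"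
    proof -
      have "continuous_map (subtopology ?P {x \<in> topspace ?P. ?p x \<le> 1}) (prod_topology (path_space X x0) unit_interval_top)
          (\<lambda>y. (w (fst (fst y)), ?p y))"
      proof (intro continuous_map_pairedI)
        show "continuous_map (subtopology ?P {x \<in> topspace ?P. ?p x \<le> 1}) (path_space X x0) (\<lambda>y. w (fst (fst y)))"
          using continuous_map_compose[OF cff w] by (simp add: o_def)
        show "continuous_map (subtopology ?P {x \<in> topspace ?P. ?p x \<le> 1}) unit_interval_top ?p"
          unfolding continuous_map_in_subtopology
          using continuous_map_from_subtopology[OF contp] by (auto intro!: arith1)
      qed
      from continuous_map_compose[OF this ev_path] show ?thesis by (simp add: o_def)
    qed
    show "continuous_map (subtopology ?P {x \<in> topspace ?P. 1 \<le> ?p x}) X ?F2"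
    proof -
      have "continuous_map (subtopology ?P {x \<in> topspace ?P. 1 \<le> ?p x}) (prod_topology T unit_interval_top)
          (\<lambda>y. (fst (fst y), ?p y - 1))"
      proof (intro continuous_map_pairedI)
        show "continuous_map (subtopology ?P {x \<in> topspace ?P. 1 \<le> ?p x}) T (\<lambda>y. fst (fst y))"
          by (rule cff)
        have "?p y - 1 \<in> {0..1}" if "y \<in> topspace ?P" "1 \<le> ?p y" for y
          using arith2[of "snd (fst y)" "snd y"] that by auto
        moreover have "continuous_map (subtopology ?P {x \<in> topspace ?P. 1 \<le> ?p x}) euclideanreal (\<lambda>y. ?p y - 1)"
          by (intro continuous_map_diff continuous_map_from_subtopology[OF contp]) simp
        ultimately show "continuous_map (subtopology ?P {x \<in> topspace ?P. 1 \<le> ?p x}) unit_interval_top (\<lambda>y. ?p y - 1)"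
          unfolding continuous_map_in_subtopology by (auto simp del: tsP)
      qed
      from continuous_map_compose[OF this h] show ?thesis by (simp add: o_def)
    qed
    show "?F1 y = ?F2 y" if "y \<in> topspace ?P" "?p y = 1" for y
      using that wh by auto
  qed simp
  have G0: "(if ?p (z,0) \<le> 1 then ?F1 (z,0) else ?F2 (z,0)) = x0" if "z \<in> topspace (prod_topology T unit_interval_top)" for z
  proof -
    have "w (fst z) \<in> path_pts X x0" using that w by (auto simp: continuous_map_def topspace_path_space)
    then show ?thesis by (simp add: path_pts_def)
  qed
  have "continuous_map (prod_topology T unit_interval_top) (path_space X x0)
     (\<lambda>z u. if u \<in> {0..1} then (\<lambda>y. if ?p y \<le> 1 then ?F1 y else ?F2 y) (z,u) else undefined)"
    by (rule exp_path[OF G]) (use G0 in auto)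
  moreover have "(\<lambda>z u. if u \<in> {0..1} then (\<lambda>y. if ?p y \<le> 1 then ?F1 y else ?F2 y) (z,u) else undefined)
      = (\<lambda>z. lam (w (fst z)) (\<lambda>v. h (fst z, v)) (snd z))"
    by (auto simp: lam_def fun_eq_iff)
  ultimately show ?thesis by simp
qed

lemma pts_least:
  assumes "z \<in> fjoin_pts E f n"
  shows "fst z (LEAST l. fst z l \<noteq> 0) \<noteq> 0"
proof -
  have "\<exists>l. fst z l \<noteq> 0"
  proof (rule ccontr)
    assume "\<not> (\<exists>l. fst z l \<noteq> 0)"
    then have "(\<Sum>l\<le>n. fst z l) = 0" by simp
    moreover obtain t x where "z = (t,x)" by (cases z)
    ultimately show False using assms by (simp add: fjoin_pts_def)
  qed
  then show ?thesis by (rule LeastI_ex)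
qed

lemma pts_proj:
  assumes "z \<in> fjoin_pts E f n" "fst z l \<noteq> 0"
  shows "fjoin_proj f z = f (snd z l)"
proof -
  obtain t x where z: "z = (t, x)" by (cases z)
  have all: "\<forall>l l'. t l \<noteq> 0 \<and> t l' \<noteq> 0 \<longrightarrow> f (x l) = f (x l')"
    using assms(1) unfolding z fjoin_pts_def mem_Collect_eq case_prod_conv by blast
  have "t (LEAST l. t l \<noteq> 0) \<noteq> 0" using pts_least[OF assms(1)] z by simp
  then show ?thesis using all assms(2) unfolding fjoin_proj_def z fst_conv snd_conv by blast
qed

lemma pts_top: "z \<in> fjoin_pts E f n \<Longrightarrow> fst z l \<noteq> 0 \<Longrightarrow> snd z l \<in> topspace E"
  by (cases z) (simp only: fjoin_pts_def mem_Collect_eq case_prod_conv prod.sel, blast)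

lemma gen_a_open: "open A \<Longrightarrow> openin (fjoin E f n) {z \<in> fjoin_pts E f n. fst z l \<in> A}"
  unfolding fjoin_def by (rule topology_generated_by_Basis) blast

lemma gen_b_open: "openin E V \<Longrightarrow> openin (fjoin E f n) {z \<in> fjoin_pts E f n. fst z l \<noteq> 0 \<and> snd z l \<in> V}"
  unfolding fjoin_def by (rule topology_generated_by_Basis) blast

lemma fjoin_proj_cont:
  assumes f: "continuous_map E B f"
  shows "continuous_map (fjoin E f n) B (fjoin_proj f)"
  unfolding continuous_map_def
proof (intro conjI allI impI)
  show "fjoin_proj f \<in> topspace (fjoin E f n) \<rightarrow> topspace B"
  proof
    fix z assume "z \<in> topspace (fjoin E f n)"
    then have z: "z \<in> fjoin_pts E f n" by (simp add: topspace_fjoin)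
    then have "snd z (LEAST l. fst z l \<noteq> 0) \<in> topspace E"
      using pts_least[OF z] by (rule pts_top)
    then show "fjoin_proj f z \<in> topspace B"
      using f unfolding fjoin_proj_def continuous_map_def by auto
  qed
next
  fix V assume V: "openin B V"
  let ?V' = "{e \<in> topspace E. f e \<in> V}"
  have V': "openin E ?V'" using openin_continuous_map_preimage[OF f V] .
  have eq: "{z \<in> topspace (fjoin E f n). fjoin_proj f z \<in> V}
     = (\<Union>l. {z \<in> fjoin_pts E f n. fst z l \<noteq> 0 \<and> snd z l \<in> ?V'})"
  proof (intro equalityI subsetI)
    fix z assume "z \<in> {z \<in> topspace (fjoin E f n). fjoin_proj f z \<in> V}"
    then have z: "z \<in> fjoin_pts E f n" "fjoin_proj f z \<in> V" by (auto simp: topspace_fjoin)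
    let ?m = "LEAST l. fst z l \<noteq> 0"
    have "fst z ?m \<noteq> 0" by (rule pts_least[OF z(1)])
    have "snd z ?m \<in> topspace E" by (rule pts_top[OF z(1) \<open>fst z ?m \<noteq> 0\<close>])
    moreover have "f (snd z ?m) \<in> V" using z(2) pts_proj[OF z(1) \<open>fst z ?m \<noteq> 0\<close>] by simp
    ultimately have "z \<in> {z \<in> fjoin_pts E f n. fst z ?m \<noteq> 0 \<and> snd z ?m \<in> ?V'}"
      using z(1) \<open>fst z ?m \<noteq> 0\<close> by blast
    then show "z \<in> (\<Union>l. {z \<in> fjoin_pts E f n. fst z l \<noteq> 0 \<and> snd z l \<in> ?V'})" by blast
  next
    fix z assume "z \<in> (\<Union>l. {z \<in> fjoin_pts E f n. fst z l \<noteq> 0 \<and> snd z l \<in> ?V'})"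
    then obtain l where zl: "z \<in> fjoin_pts E f n" "fst z l \<noteq> 0" "snd z l \<in> ?V'" by blast
    have "fjoin_proj f z = f (snd z l)" by (rule pts_proj[OF zl(1,2)])
    then show "z \<in> {z \<in> topspace (fjoin E f n). fjoin_proj f z \<in> V}"
      using zl by (simp add: topspace_fjoin)
  qed
  show "openin (fjoin E f n) {z \<in> topspace (fjoin E f n). fjoin_proj f z \<in> V}"
    unfolding eq by (intro openin_Union) (use gen_b_open[OF V'] in blast)
qed

lemma path_end_cont: "continuous_map (path_space X x0) X path_end"
proof -
  have "continuous_map (path_space X x0) (prod_topology (path_space X x0) unit_interval_top) (\<lambda>w. (w, 1))"
    by (intro continuous_map_pairedI) auto
  from continuous_map_compose[OF this ev_path] show ?thesis
    by (simp add: o_def path_end_def[abs_def])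
qed

definition liftJ :: "((nat \<Rightarrow> real) \<times> (nat \<Rightarrow> (real \<Rightarrow> 'a))) \<Rightarrow> (real \<Rightarrow> 'a) \<Rightarrow> real \<Rightarrow> ((nat \<Rightarrow> real) \<times> (nat \<Rightarrow> (real \<Rightarrow> 'a)))" where
  "liftJ g h s = (fst g, \<lambda>l. if fst g l = 0 then undefined else lam (snd g l) h s)"

lemma lam_end: "s \<in> {0..1} \<Longrightarrow> w 1 = h 0 \<Longrightarrow> lam w h s 1 = h s"
  by (auto simp: lam_def)

lemma lam_0: "w \<in> path_pts X x0 \<Longrightarrow> lam w h 0 = w"
  by (auto simp: lam_def path_pts_def fun_eq_iff)

lemma lift_join_cont:
  assumes g: "continuous_map K (fjoin (path_space X x0) path_end n) g"
    and h: "continuous_map (prod_topology K unit_interval_top) X h"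
    and gh: "\<And>k. k \<in> topspace K \<Longrightarrow> h (k,0) = fjoin_proj path_end (g k)"
  shows "continuous_map (prod_topology K unit_interval_top) (fjoin (path_space X x0) path_end n)
           (\<lambda>z. liftJ (g (fst z)) (\<lambda>v. h (fst z, v)) (snd z))"
proof -
  let ?E = "path_space X x0"
  let ?J = "fjoin ?E path_end n"
  let ?KI = "prod_topology K unit_interval_top"
  let ?L = "\<lambda>z. liftJ (g (fst z)) (\<lambda>v. h (fst z, v)) (snd z)"
  have gpts: "g k \<in> fjoin_pts ?E path_end n" if "k \<in> topspace K" for k
    using g that by (auto simp: continuous_map_def topspace_fjoin)
  have end1: "snd (g k) l 1 = h (k,0)" if "k \<in> topspace K" "fst (g k) l \<noteq> 0" for k l
    using pts_proj[OF gpts[OF that(1)] that(2)] gh[OF that(1)] by (simp add: path_end_def)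
  define Op where "Op l = {k \<in> topspace K. fst (g k) l \<noteq> 0}" for l
  have Oeq: "Op l = {k \<in> topspace K. g k \<in> {z \<in> fjoin_pts ?E path_end n. fst z l \<noteq> 0 \<and> snd z l \<in> topspace ?E}}" for l
    using gpts pts_top[OF gpts] unfolding Op_def by auto
  have Oo: "openin K (Op l)" for l
    unfolding Oeq by (rule openin_continuous_map_preimage[OF g gen_b_open]) simp
  have xc: "continuous_map (subtopology K (Op l)) ?E (\<lambda>k. snd (g k) l)" for l
    unfolding continuous_map_def
  proof (intro conjI allI impI)
    show "(\<lambda>k. snd (g k) l) \<in> topspace (subtopology K (Op l)) \<rightarrow> topspace ?E"
    proof
      fix k assume "k \<in> topspace (subtopology K (Op l))"
      then have "k \<in> topspace K" "fst (g k) l \<noteq> 0" by (auto simp: Op_def)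
      then show "snd (g k) l \<in> topspace ?E" by (intro pts_top[OF gpts])
    qed
    fix V assume V: "openin ?E V"
    have e: "{k \<in> topspace (subtopology K (Op l)). snd (g k) l \<in> V} = {k \<in> topspace K. g k \<in> {z \<in> fjoin_pts ?E path_end n. fst z l \<noteq> 0 \<and> snd z l \<in> V}}"
      using gpts unfolding Op_def by auto
    have o: "openin K {k \<in> topspace K. g k \<in> {z \<in> fjoin_pts ?E path_end n. fst z l \<noteq> 0 \<and> snd z l \<in> V}}"
      by (rule openin_continuous_map_preimage[OF g gen_b_open[OF V]])
    have sub: "{k \<in> topspace K. g k \<in> {z \<in> fjoin_pts ?E path_end n. fst z l \<noteq> 0 \<and> snd z l \<in> V}} \<subseteq> Op l"
      unfolding Op_def by auto
    show "openin (subtopology K (Op l)) {k \<in> topspace (subtopology K (Op l)). snd (g k) l \<in> V}"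
      unfolding e using openin_open_subtopology[OF Oo[of l]] o sub by blast
  qed
  have hc: "continuous_map (prod_topology (subtopology K (Op l)) unit_interval_top) X h" for l
    unfolding prod_topology_subtopology(1)[of K "Op l" unit_interval_top] by (rule continuous_map_from_subtopology[OF h])
  have Fc: "continuous_map (prod_topology (subtopology K (Op l)) unit_interval_top) ?E
       (\<lambda>z. lam (snd (g (fst z)) l) (\<lambda>v. h (fst z, v)) (snd z))" for l
  proof (rule lift_path_cont[OF xc hc])
    fix k assume "k \<in> topspace (subtopology K (Op l))"
    then have "k \<in> topspace K" "fst (g k) l \<noteq> 0" by (auto simp: Op_def)
    then show "snd (g k) l 1 = h (k,0)" by (rule end1)
  qed
  have mem: "?L z \<in> fjoin_pts ?E path_end n" if "z \<in> topspace ?KI" for z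
  proof -
    obtain k s where z: "z = (k,s)" by (cases z)
    have k: "k \<in> topspace K" and s: "s \<in> {0..1}" using that z by auto
    obtain t x where gk: "g k = (t,x)" by (cases "g k")
    have p: "(t,x) \<in> fjoin_pts ?E path_end n" using gpts[OF k] gk by simp
    have P: "(\<forall>l. 0 \<le> t l) \<and> (\<forall>l>n. t l = 0) \<and> (\<Sum>l\<le>n. t l) = 1"
      using p unfolding fjoin_pts_def mem_Collect_eq case_prod_conv by blast
    have inE: "lam (x l) (\<lambda>v. h(k,v)) s \<in> topspace ?E" if "t l \<noteq> 0" for l
    proof -
      have "(k,s) \<in> topspace (prod_topology (subtopology K (Op l)) unit_interval_top)"
        using k s that gk by (auto simp: Op_def)
      then have "(\<lambda>z. lam (snd (g (fst z)) l) (\<lambda>v. h (fst z, v)) (snd z)) (k,s) \<in> topspace ?E"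
        by (rule subsetD[OF continuous_map_image_subset_topspace[OF Fc[of l]] imageI])
      then show ?thesis using gk by simp
    qed
    have endl: "path_end (lam (x l) (\<lambda>v. h(k,v)) s) = h (k,s)" if "t l \<noteq> 0" for l
    proof -
      have "x l 1 = h (k,0)" using end1[OF k, of l] gk that by simp
      then show ?thesis using lam_end[OF s, of "x l" "\<lambda>v. h(k,v)"] by (simp add: path_end_def)
    qed
    show ?thesis unfolding z liftJ_def fst_conv snd_conv gk fjoin_pts_def mem_Collect_eq case_prod_conv
      by (intro conjI allI impI) (use P inE endl in simp_all)
  qed
  show ?thesis unfolding fjoin_def
  proof (rule continuous_on_generated_topo)
    show "?L ` topspace ?KI \<subseteq> \<Union> ({{z \<in> fjoin_pts ?E path_end n. fst z l \<in> U} | l U. open U}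
      \<union> {{z \<in> fjoin_pts ?E path_end n. fst z l \<noteq> 0 \<and> snd z l \<in> V} | l V. openin ?E V})"
      using mem topspace_fjoin[of ?E path_end n] unfolding fjoin_def topology_generated_by_topspace by blast
  next
    fix U assume "U \<in> {{z \<in> fjoin_pts ?E path_end n. fst z l \<in> U} | l U. open U}
      \<union> {{z \<in> fjoin_pts ?E path_end n. fst z l \<noteq> 0 \<and> snd z l \<in> V} | l V. openin ?E V}"
    then consider (a) l A where "U = {z \<in> fjoin_pts ?E path_end n. fst z l \<in> A}" "open A"
      | (b) l V where "U = {z \<in> fjoin_pts ?E path_end n. fst z l \<noteq> 0 \<and> snd z l \<in> V}" "openin ?E V"
      by blast
    then show "openin ?KI (?L -` U \<inter> topspace ?KI)"
    proof cases
      case a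
      have e: "?L -` U \<inter> topspace ?KI = {z \<in> topspace ?KI. g (fst z) \<in> {z \<in> fjoin_pts ?E path_end n. fst z l \<in> A}}"
      proof (intro set_eqI iffI)
        fix z assume "z \<in> ?L -` U \<inter> topspace ?KI"
        then show "z \<in> {z \<in> topspace ?KI. g (fst z) \<in> {z \<in> fjoin_pts ?E path_end n. fst z l \<in> A}}"
          using gpts by (auto simp: a liftJ_def)
      next
        fix z assume "z \<in> {z \<in> topspace ?KI. g (fst z) \<in> {z \<in> fjoin_pts ?E path_end n. fst z l \<in> A}}"
        then show "z \<in> ?L -` U \<inter> topspace ?KI"
          using mem[of z] by (auto simp: a liftJ_def)
      qed
      have "continuous_map ?KI ?J (\<lambda>z. g (fst z))"
        using continuous_map_compose[OF continuous_map_fst g] by (simp add: o_def)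
      then show ?thesis unfolding e by (rule openin_continuous_map_preimage[OF _ gen_a_open[OF a(2)]])
    next
      case b
      let ?F = "\<lambda>z. lam (snd (g (fst z)) l) (\<lambda>v. h (fst z, v)) (snd z)"
      let ?T = "prod_topology (subtopology K (Op l)) unit_interval_top"
      have e: "?L -` U \<inter> topspace ?KI = {z \<in> topspace ?T. ?F z \<in> V}"
      proof (intro set_eqI iffI)
        fix z assume "z \<in> ?L -` U \<inter> topspace ?KI"
        then show "z \<in> {z \<in> topspace ?T. ?F z \<in> V}"
          by (auto simp: b liftJ_def Op_def)
      next
        fix z assume "z \<in> {z \<in> topspace ?T. ?F z \<in> V}"
        then show "z \<in> ?L -` U \<inter> topspace ?KI"
          using mem[of z] by (auto simp: b liftJ_def Op_def)
      qed
      have o1: "openin ?T {z \<in> topspace ?T. ?F z \<in> V}"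
        by (rule openin_continuous_map_preimage[OF Fc b(2)])
      have T: "?T = subtopology ?KI (Op l \<times> {0..1})" using prod_topology_subtopology(1)[of K "Op l" unit_interval_top] by simp
      have o2: "openin ?KI (Op l \<times> {0..1})" using Oo[of l] by (simp add: openin_prod_Times_iff)
      show ?thesis unfolding e using o1 unfolding T openin_open_subtopology[OF o2] by blast
    qed
  qed
qed

lemma liftJ_proj:
  assumes z: "z \<in> fjoin_pts (path_space X x0) path_end n" and s: "s \<in> {0..1}"
    and h0: "h 0 = fjoin_proj path_end z"
  shows "fjoin_proj path_end (liftJ z h s) = h s"
proof -
  let ?m = "LEAST l. fst z l \<noteq> 0"
  have tm: "fst z ?m \<noteq> 0" by (rule pts_least[OF z])
  have e1: "snd z ?m 1 = h 0" using pts_proj[OF z tm] h0 by (simp add: path_end_def)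
  have "fjoin_proj path_end (liftJ z h s) = path_end (lam (snd z ?m) h s)"
    using tm by (simp add: fjoin_proj_def liftJ_def)
  also have "\<dots> = h s" using lam_end[OF s, of "snd z ?m" h] e1 by (simp add: path_end_def)
  finally show ?thesis .
qed

lemma liftJ_0:
  assumes z: "z \<in> fjoin_pts (path_space X x0) path_end n"
  shows "liftJ z h 0 = z"
proof -
  obtain t x where zz: "z = (t,x)" by (cases z)
  have A: "\<forall>l. t l = 0 \<longrightarrow> x l = undefined" and B: "\<forall>l. t l \<noteq> 0 \<longrightarrow> x l \<in> topspace (path_space X x0)"
    using z unfolding zz fjoin_pts_def mem_Collect_eq case_prod_conv by blast+
  have "(\<lambda>l. if t l = 0 then undefined else lam (x l) h 0) = x"
  proof
    fix l show "(if t l = 0 then undefined else lam (x l) h 0) = x l"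
      using A B lam_0[of "x l" X x0 h] by (auto simp: topspace_path_space)
  qed
  then show ?thesis unfolding zz liftJ_def fst_conv snd_conv by simp
qed

lemma pts_level:
  assumes "z \<in> fjoin_pts E f i" "z' \<in> fjoin_pts E f k" "fst z = fst z'"
  shows "z' \<in> fjoin_pts E f i"
proof -
  obtain t x where zz: "z = (t,x)" by (cases z)
  obtain t' x' where zz': "z' = (t',x')" by (cases z')
  show ?thesis using assms unfolding zz zz' fjoin_pts_def mem_Collect_eq case_prod_conv fst_conv by blast
qed

lemma fib_cont: "continuous_map (ganea X x0 n) X ganea_fib"
  unfolding ganea_def ganea_fib_def[abs_def] by (rule fjoin_proj_cont[OF path_end_cont])

theorem mainTheorem7:
  fixes X :: "'a topology" and Y :: "'b topology" and x0 :: 'a and y0 :: 'b and k :: nat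
  assumes "cw_complex X" and "cw_complex Y"
    and "path_connected_space X" and "path_connected_space Y"
    and "x0 \<in> topspace X" and "y0 \<in> topspace Y"
  shows "serre_fibration TYPE('c) (ganea_prod X x0 Y y0 k) (prod_topology X Y) ganea_prod_fib"
  unfolding serre_fibration_def
proof (intro conjI allI impI)
  let ?GX = "ganea X x0 k" and ?GY = "ganea Y y0 k"
  let ?S = "\<Union>i\<le>k. topspace (ganea X x0 i) \<times> topspace (ganea Y y0 (k - i))"
  let ?E = "ganea_prod X x0 Y y0 k"
  have Edef: "?E = subtopology (prod_topology ?GX ?GY) ?S" by (rule ganea_prod_def)
  show "continuous_map ?E (prod_topology X Y) ganea_prod_fib"
    unfolding Edef ganea_prod_fib_def[abs_def]
  proof (intro continuous_map_pairedI)
    show "continuous_map (subtopology (prod_topology ?GX ?GY) ?S) X (\<lambda>z. ganea_fib (fst z))"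
      using continuous_map_from_subtopology[OF continuous_map_compose[OF continuous_map_fst fib_cont]]
      by (simp add: o_def)
    show "continuous_map (subtopology (prod_topology ?GX ?GY) ?S) Y (\<lambda>z. ganea_fib (snd z))"
      using continuous_map_from_subtopology[OF continuous_map_compose[OF continuous_map_snd fib_cont]]
      by (simp add: o_def)
  qed
  fix K :: "'c topology"
  assume "cw_complex K"
  show "homotopy_lifting K ?E (prod_topology X Y) ganea_prod_fib"
    unfolding homotopy_lifting_def
  proof (intro allI impI, elim conjE)
    fix f H
    assume f: "continuous_map K ?E f"
      and H: "continuous_map (prod_topology K unit_interval_top) (prod_topology X Y) H"
      and H0: "\<forall>k\<in>topspace K. H (k, 0) = ganea_prod_fib (f k)"
    have fp: "continuous_map K (prod_topology ?GX ?GY) f"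
      using f unfolding Edef by (rule continuous_map_into_fulltopology)
    have fS: "f q \<in> ?S" if "q \<in> topspace K" for q
      using f that unfolding Edef continuous_map_in_subtopology Pi_iff by blast
    have gX: "continuous_map K (fjoin (path_space X x0) path_end k) (\<lambda>q. fst (f q))"
      using continuous_map_compose[OF fp continuous_map_fst] by (simp add: o_def ganea_def)
    have gY: "continuous_map K (fjoin (path_space Y y0) path_end k) (\<lambda>q. snd (f q))"
      using continuous_map_compose[OF fp continuous_map_snd] by (simp add: o_def ganea_def)
    have hX: "continuous_map (prod_topology K unit_interval_top) X (\<lambda>z. fst (H z))"
      using continuous_map_compose[OF H continuous_map_fst] by (simp add: o_def)
    have hY: "continuous_map (prod_topology K unit_interval_top) Y (\<lambda>z. snd (H z))"
      using continuous_map_compose[OF H continuous_map_snd] by (simp add: o_def)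
    have ghX: "fst (H (q,0)) = fjoin_proj path_end (fst (f q))" if "q \<in> topspace K" for q
      using H0 that by (simp add: ganea_prod_fib_def ganea_fib_def)
    have ghY: "snd (H (q,0)) = fjoin_proj path_end (snd (f q))" if "q \<in> topspace K" for q
      using H0 that by (simp add: ganea_prod_fib_def ganea_fib_def)
    let ?LX = "\<lambda>z. liftJ (fst (f (fst z))) (\<lambda>v. fst (H (fst z, v))) (snd z)"
    let ?LY = "\<lambda>z. liftJ (snd (f (fst z))) (\<lambda>v. snd (H (fst z, v))) (snd z)"
    have LX: "continuous_map (prod_topology K unit_interval_top) ?GX ?LX"
      unfolding ganea_def by (rule lift_join_cont[OF gX hX ghX])
    have LY: "continuous_map (prod_topology K unit_interval_top) ?GY ?LY"
      unfolding ganea_def by (rule lift_join_cont[OF gY hY ghY])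
    have fXpts: "fst (f q) \<in> fjoin_pts (path_space X x0) path_end k" if "q \<in> topspace K" for q
      using continuous_map_image_subset_topspace[OF gX] that by (auto simp: topspace_fjoin)
    have fYpts: "snd (f q) \<in> fjoin_pts (path_space Y y0) path_end k" if "q \<in> topspace K" for q
      using continuous_map_image_subset_topspace[OF gY] that by (auto simp: topspace_fjoin)
    show "\<exists>H'. continuous_map (prod_topology K unit_interval_top) ?E H' \<and>
            (\<forall>z\<in>topspace (prod_topology K unit_interval_top). ganea_prod_fib (H' z) = H z) \<and>
            (\<forall>k\<in>topspace K. H' (k, 0) = f k)"
    proof (intro exI[of _ "\<lambda>z. (?LX z, ?LY z)"] conjI ballI)
      show "continuous_map (prod_topology K unit_interval_top) ?E (\<lambda>z. (?LX z, ?LY z))"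
        unfolding Edef continuous_map_in_subtopology
      proof
        show "continuous_map (prod_topology K unit_interval_top) (prod_topology ?GX ?GY) (\<lambda>z. (?LX z, ?LY z))"
          by (intro continuous_map_pairedI LX LY)
        show "(\<lambda>z. (?LX z, ?LY z)) \<in> topspace (prod_topology K unit_interval_top) \<rightarrow> ?S"
        proof
          fix z assume z: "z \<in> topspace (prod_topology K unit_interval_top)"
          then have q: "fst z \<in> topspace K" by auto
          from fS[OF q] obtain i where i0: "i \<in> {..k}" "f (fst z) \<in> topspace (ganea X x0 i) \<times> topspace (ganea Y y0 (k - i))"
            by (rule UN_E)
          have i: "i \<le> k" "fst (f (fst z)) \<in> topspace (ganea X x0 i)"
            "snd (f (fst z)) \<in> topspace (ganea Y y0 (k - i))" using i0 by (auto simp: mem_Times_iff)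
          have lx: "?LX z \<in> fjoin_pts (path_space X x0) path_end k"
            using continuous_map_image_subset_topspace[OF LX] z by (auto simp: topspace_fjoin ganea_def)
          have ly: "?LY z \<in> fjoin_pts (path_space Y y0) path_end k"
            using continuous_map_image_subset_topspace[OF LY] z by (auto simp: topspace_fjoin ganea_def)
          have "?LX z \<in> topspace (ganea X x0 i)"
            using pts_level[OF i(2)[unfolded ganea_def topspace_fjoin] lx] by (simp add: liftJ_def ganea_def topspace_fjoin)
          moreover have "?LY z \<in> topspace (ganea Y y0 (k - i))"
            using pts_level[OF i(3)[unfolded ganea_def topspace_fjoin] ly] by (simp add: liftJ_def ganea_def topspace_fjoin)
          ultimately show "(?LX z, ?LY z) \<in> ?S" using i0(1) by (intro UN_I[of i] SigmaI)
        qed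
      qed
    next
      fix z assume z: "z \<in> topspace (prod_topology K unit_interval_top)"
      then have q: "fst z \<in> topspace K" and s: "snd z \<in> {0..1}" by auto
      have "fjoin_proj path_end (?LX z) = fst (H (fst z, snd z))"
        by (rule liftJ_proj[OF fXpts[OF q] s]) (use ghX[OF q] in simp)
      moreover have "fjoin_proj path_end (?LY z) = snd (H (fst z, snd z))"
        by (rule liftJ_proj[OF fYpts[OF q] s]) (use ghY[OF q] in simp)
      ultimately show "ganea_prod_fib (?LX z, ?LY z) = H z"
        by (simp add: ganea_prod_fib_def ganea_fib_def)
    next
      fix q assume q: "q \<in> topspace K"
      show "(?LX (q,0), ?LY (q,0)) = f q"
        using liftJ_0[OF fXpts[OF q]] liftJ_0[OF fYpts[OF q]] by simp
    qed
  qed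
qed

end
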